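(* Let $M$ be a multiplier on $\mathscr{A}(\mathbb{R})$ with multiplier sequence $(m_n)_{n\in\mathbb{N}}$. If $M$ is the generator of a $C_0$-semigroup $(T_t)_{t\geq 0}$ on $\mathscr{A}(\mathbb{R})$, then every $T_t$ is a multiplier, and for every $t\geq 0$ the multiplier sequence of $T_t$ is $(\exp(tm_n))_{n\in\mathbb{N}}$.
   Context: $\mathscr{A}(\mathbb{R})$ denotes the space of real analytic functions on $\mathbb{R}$ with its natural inductive limit topology $\mathscr{A}(\mathbb{R})=\operatorname{ind}_{U\supset\mathbb{R}}H(U)$, where $U$ runs over complex open neighbourhoods of $\mathbb{R}$ and $H(U)$ carries the compact-open topology. A continuous linear operator $M:\mathscr{A}(\mathbb{R})\to\mathscr{A}(\mathbb{R})$ is a multiplier if $M(x^n)=m_nx^n$ for all $n\in\mathbb{N}$; $(m_n)$ is its multiplier sequence. A $C_0$-semigroup is a family $(T_t)_{t\ge0}$ of continuous linear operators with $T_tT_s=T_{t+s}$, $T_0=I$, and $t\mapsto T_tf$ continuous for each $f$; its generator is $Af=\lim_{t\to0^+}(T_tf-f)/t$ on the domain where this limit exists. "$M$ generates the semigroup" means $M$ is its generator. *)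

theory Defs
  imports "HOL-Analysis.Analysis"
begin

text \<open>Complex-valued real analytic functions on the real line: restrictions to the real
  axis of functions holomorphic on some open complex neighbourhood of the real axis.\<close>
definition AR :: "(real \<Rightarrow> complex) set" where
  "AR = {f. \<exists>U g. open U \<and> range complex_of_real \<subseteq> U \<and> g holomorphic_on U
                 \<and> (\<forall>x. g (complex_of_real x) = f x)}"

text \<open>Continuous seminorms of the locally convex inductive limit topology
  ind_{U} H(U): seminorms p on AR such that for every open U containing the real axis,
  p composed with the restriction map H(U) -> AR is continuous for the compact-open
  topology, i.e. dominated by a constant times the sup norm on a compact subset of U.\<close>
definition AR_cont_seminorm :: "((real \<Rightarrow> complex) \<Rightarrow> real) \<Rightarrow> bool" where
  "AR_cont_seminorm p \<longleftrightarrow>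
     (\<forall>f\<in>AR. 0 \<le> p f) \<and>
     (\<forall>f\<in>AR. \<forall>g\<in>AR. p (\<lambda>x. f x + g x) \<le> p f + p g) \<and>
     (\<forall>c::complex. \<forall>f\<in>AR. p (\<lambda>x. c * f x) = norm c * p f) \<and>
     (\<forall>U. open U \<and> range complex_of_real \<subseteq> U \<longrightarrow>
        (\<exists>K C. compact K \<and> K \<noteq> {} \<and> K \<subseteq> U \<and>
           (\<forall>g. g holomorphic_on U \<longrightarrow>
                p (\<lambda>x. g (complex_of_real x)) \<le> C * (SUP z\<in>K. norm (g z)))))"

definition AR_tendsto :: "('a \<Rightarrow> real \<Rightarrow> complex) \<Rightarrow> (real \<Rightarrow> complex) \<Rightarrow> 'a filter \<Rightarrow> bool" where
  "AR_tendsto F l net \<longleftrightarrow>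
     (\<forall>p. AR_cont_seminorm p \<longrightarrow> ((\<lambda>t. p (\<lambda>x. F t x - l x)) \<longlongrightarrow> 0) net)"

definition AR_operator :: "((real \<Rightarrow> complex) \<Rightarrow> (real \<Rightarrow> complex)) \<Rightarrow> bool" where
  "AR_operator T \<longleftrightarrow>
     (\<forall>f\<in>AR. T f \<in> AR) \<and>
     (\<forall>f\<in>AR. \<forall>g\<in>AR. T (\<lambda>x. f x + g x) = (\<lambda>x. T f x + T g x)) \<and>
     (\<forall>c::complex. \<forall>f\<in>AR. T (\<lambda>x. c * f x) = (\<lambda>x. c * T f x)) \<and>
     (\<forall>q. AR_cont_seminorm q \<longrightarrow> AR_cont_seminorm (\<lambda>f. q (T f)))"

definition is_multiplier ::
  "((real \<Rightarrow> complex) \<Rightarrow> (real \<Rightarrow> complex)) \<Rightarrow> (nat \<Rightarrow> complex) \<Rightarrow> bool" where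
  "is_multiplier M m \<longleftrightarrow> AR_operator M \<and>
     (\<forall>n. M (\<lambda>x. (complex_of_real x) ^ n) = (\<lambda>x. m n * (complex_of_real x) ^ n))"

definition C0_semigroup ::
  "(real \<Rightarrow> (real \<Rightarrow> complex) \<Rightarrow> (real \<Rightarrow> complex)) \<Rightarrow> bool" where
  "C0_semigroup T \<longleftrightarrow>
     (\<forall>t\<ge>0. AR_operator (T t)) \<and>
     (\<forall>t s f. t \<ge> 0 \<longrightarrow> s \<ge> 0 \<longrightarrow> f \<in> AR \<longrightarrow> T t (T s f) = T (t + s) f) \<and>
     (\<forall>f\<in>AR. T 0 f = f) \<and>
     (\<forall>f\<in>AR. \<forall>s\<ge>0. AR_tendsto (\<lambda>t. T t f) (T s f) (at s within {0..}))"

text \<open>M is the generator of T: the difference quotients converge for every f in AR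
  (so the domain of the generator is all of AR) and the limit is M f.\<close>
definition generates ::
  "((real \<Rightarrow> complex) \<Rightarrow> (real \<Rightarrow> complex)) \<Rightarrow>
   (real \<Rightarrow> (real \<Rightarrow> complex) \<Rightarrow> (real \<Rightarrow> complex)) \<Rightarrow> bool" where
  "generates M T \<longleftrightarrow>
     (\<forall>f\<in>AR. AR_tendsto (\<lambda>t. \<lambda>x. (T t f x - f x) / complex_of_real t) (M f) (at_right 0))"

end

theory Submission
  imports Defs
begin

lemma AR_add: "f \<in> AR \<Longrightarrow> g \<in> AR \<Longrightarrow> (\<lambda>x. f x + g x) \<in> AR"
proof -
  assume "f \<in> AR" "g \<in> AR"
  then obtain U1 g1 U2 g2 where 1: "open U1" "range complex_of_real \<subseteq> U1" "g1 holomorphic_on U1"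
      "\<forall>x. g1 (complex_of_real x) = f x"
    and 2: "open U2" "range complex_of_real \<subseteq> U2" "g2 holomorphic_on U2"
      "\<forall>x. g2 (complex_of_real x) = g x"
    unfolding AR_def by blast
  show ?thesis unfolding AR_def
    apply (rule CollectI, rule exI[of _ "U1 \<inter> U2"], rule exI[of _ "\<lambda>z. g1 z + g2 z"])
    using 1 2 by (auto intro!: holomorphic_intros elim: holomorphic_on_subset)
qed

lemma AR_scale: "f \<in> AR \<Longrightarrow> (\<lambda>x. c * f x) \<in> AR"
proof -
  assume "f \<in> AR"
  then obtain U1 g1 where 1: "open U1" "range complex_of_real \<subseteq> U1" "g1 holomorphic_on U1"
      "\<forall>x. g1 (complex_of_real x) = f x"
    unfolding AR_def by blast
  show ?thesis unfolding AR_def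
    apply (rule CollectI, rule exI[of _ "U1"], rule exI[of _ "\<lambda>z. c * g1 z"])
    using 1 by (auto intro!: holomorphic_intros)
qed

lemma AR_pow: "(\<lambda>x. complex_of_real x ^ n) \<in> AR"
  unfolding AR_def
  by (rule CollectI, rule exI[of _ UNIV], rule exI[of _ "\<lambda>z. z ^ n"]) (auto intro!: holomorphic_intros)

lemma AR_diff: "f \<in> AR \<Longrightarrow> g \<in> AR \<Longrightarrow> (\<lambda>x. f x - g x) \<in> AR"
  using AR_add[of f "\<lambda>x. (-1) * g x"] AR_scale[of g "-1"] by simp

lemma op_diff:
  assumes "AR_operator S" "f \<in> AR" "g \<in> AR"
  shows "S (\<lambda>x. f x - g x) = (\<lambda>x. S f x - S g x)"
proof -
  have "S (\<lambda>x. f x - g x) = S (\<lambda>x. f x + (\<lambda>x. (-1) * g x) x)" by simp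
  also have "\<dots> = (\<lambda>x. S f x + S (\<lambda>x. (-1) * g x) x)"
  proof -
    have "(\<lambda>x. (-1) * g x) \<in> AR" using assms(3) by (rule AR_scale)
    moreover have "\<forall>f\<in>AR. \<forall>g\<in>AR. S (\<lambda>x. f x + g x) = (\<lambda>x. S f x + S g x)"
      using assms(1) unfolding AR_operator_def by blast
    ultimately show ?thesis using assms(2) by (meson bspec)
  qed
  also have "S (\<lambda>x. (-1) * g x) = (\<lambda>x. (-1) * S g x)"
    using assms unfolding AR_operator_def by blast
  finally show ?thesis by simp
qed

lemma eval_seminorm: "AR_cont_seminorm (\<lambda>f. norm (f x0))"
  unfolding AR_cont_seminorm_def
proof (intro conjI allI impI ballI)
  fix U :: "complex set" assume U: "open U \<and> range complex_of_real \<subseteq> U"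
  show "\<exists>K C. compact K \<and> K \<noteq> {} \<and> K \<subseteq> U \<and>
           (\<forall>g. g holomorphic_on U \<longrightarrow>
                norm (g (complex_of_real x0)) \<le> C * (SUP z\<in>K. norm (g z)))"
    apply (rule exI[of _ "{complex_of_real x0}"], rule exI[of _ 1])
    using U by auto
qed (auto simp: norm_mult norm_triangle_ineq)

lemma AR_tendsto_pointwise:
  assumes "AR_tendsto F l net"
  shows "((\<lambda>t. F t x) \<longlongrightarrow> l x) net"
proof -
  have "((\<lambda>t. norm (F t x - l x)) \<longlongrightarrow> 0) net"
    using assms eval_seminorm[of x] unfolding AR_tendsto_def by auto
  then show ?thesis
    by (simp add: tendsto_norm_zero_iff LIM_zero_iff)
qed

lemma op_tendsto_pointwise:
  assumes S: "AR_operator S" and F: "AR_tendsto F l net"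
    and ev: "eventually (\<lambda>t. F t \<in> AR) net" and l: "l \<in> AR"
  shows "((\<lambda>t. S (F t) x) \<longlongrightarrow> S l x) net"
proof -
  have q: "AR_cont_seminorm (\<lambda>g. norm (S g x))"
    using S eval_seminorm[of x] unfolding AR_operator_def by auto
  have "((\<lambda>t. norm (S (\<lambda>y. F t y - l y) x)) \<longlongrightarrow> 0) net"
    using F q unfolding AR_tendsto_def by auto
  moreover have "eventually (\<lambda>t. norm (S (\<lambda>y. F t y - l y) x) = norm (S (F t) x - S l x)) net"
    using ev by eventually_elim (simp add: op_diff[OF S _ l])
  ultimately have "((\<lambda>t. norm (S (F t) x - S l x)) \<longlongrightarrow> 0) net"
    by (rule Lim_transform_eventually)
  then show ?thesis
    by (simp add: tendsto_norm_zero_iff LIM_zero_iff)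
qed


lemma right_deriv_zero_const:
  fixes v :: "real \<Rightarrow> complex"
  assumes cont: "\<And>s. s \<ge> 0 \<Longrightarrow> (v \<longlongrightarrow> v s) (at s within {0..})"
    and der: "\<And>s. s \<ge> 0 \<Longrightarrow> ((\<lambda>h. (v (s+h) - v s) / complex_of_real h) \<longlongrightarrow> 0) (at_right 0)"
    and t: "t \<ge> 0"
  shows "v t = v 0"
proof -
  have main: "norm (v t - v 0) \<le> e * t + e" if e: "e > 0" for e
  proof (rule ccontr)
    assume nt: "\<not> ?thesis"
    define B where "B = {s. 0 \<le> s \<and> s \<le> t \<and> norm (v s - v 0) > e * s + e}"
    have tB: "t \<in> B" using nt t unfolding B_def by auto
    have bdd: "bdd_below B" unfolding B_def bdd_below_def by auto
    define a where "a = Inf B"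
    have a0: "a \<ge> 0" unfolding a_def using tB by (intro cInf_greatest) (auto simp: B_def)
    have at: "a \<le> t" unfolding a_def using tB bdd by (rule cInf_lower)
    have below: "norm (v s - v 0) \<le> e * s + e" if "0 \<le> s" "s < a" for s
    proof (rule ccontr)
      assume "\<not> ?thesis"
      then have "s \<in> B" using that at unfolding B_def by auto
      then have "a \<le> s" unfolding a_def using bdd by (rule cInf_lower)
      then show False using that by simp
    qed
    have aok: "norm (v a - v 0) \<le> e * a + e"
    proof (cases "a = 0")
      case True then show ?thesis using e by simp
    next
      case False
      then have apos: "a > 0" using a0 by simp
      have "(v \<longlongrightarrow> v a) (at a within {0..a})"
        using cont[OF a0] by (rule tendsto_within_subset) auto
      then have lim: "(v \<longlongrightarrow> v a) (at_left a)"
        using apos by (simp add: at_within_Icc_at_left)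
      have "((\<lambda>s. norm (v s - v 0) - (e * s + e)) \<longlongrightarrow> norm (v a - v 0) - (e * a + e)) (at_left a)"
        by (intro tendsto_intros lim)
      moreover have "eventually (\<lambda>s. norm (v s - v 0) - (e * s + e) \<le> 0) (at_left a)"
        using eventually_at_left_real[OF apos] by eventually_elim (use below in auto)
      ultimately have "norm (v a - v 0) - (e * a + e) \<le> 0"
        by (rule tendsto_upperbound) simp
      then show ?thesis by simp
    qed
    then have aB: "a \<notin> B" unfolding B_def by auto
    have "eventually (\<lambda>h. norm ((v (a+h) - v a) / complex_of_real h) < e) (at_right 0)"
      using der[OF a0] e by (auto simp: tendsto_iff dist_norm)
    then obtain d where d: "d > 0" "\<And>h. 0 < h \<Longrightarrow> h < d \<Longrightarrow> norm ((v (a+h) - v a) / complex_of_real h) < e"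
      by (auto simp: eventually_at_right_field)
    have "\<exists>c\<in>B. c < a + d" unfolding a_def using tB d(1)
      by (intro cInf_lessD) (auto simp: a_def[symmetric])
    then obtain c where c: "c \<in> B" "c < a + d" by blast
    have "a \<le> c" unfolding a_def using c(1) bdd by (rule cInf_lower)
    with aB c have ac: "a < c" by (cases "a = c") auto
    have "norm ((v (a+(c-a)) - v a) / complex_of_real (c-a)) < e" using ac c by (intro d(2)) auto
    moreover have "norm (complex_of_real (c - a)) = c - a" using ac by (simp only: norm_of_real abs_of_pos diff_gt_0_iff_gt)
    ultimately have "norm (v c - v a) < e * (c - a)" using ac
      by (simp add: norm_divide divide_less_eq del: of_real_diff)
    then have "norm (v c - v 0) \<le> e * c + e"
      using aok norm_triangle_ineq[of "v c - v a" "v a - v 0"] by (simp add: algebra_simps)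
    then show False using c(1) unfolding B_def by auto
  qed
  have "norm (v t - v 0) \<le> 0"
  proof (rule field_le_epsilon)
    fix e :: real assume "e > 0"
    then have "norm (v t - v 0) \<le> (e/(t+1)) * t + e/(t+1)" using t by (intro main) auto
    also have "\<dots> = (e/(t+1)) * (t+1)" by (simp add: distrib_left)
    also have "\<dots> = e" using t by simp
    finally show "norm (v t - v 0) \<le> 0 + e" by simp
  qed
  then show ?thesis by simp
qed


lemma exp_quot:
  fixes c :: complex
  shows "((\<lambda>h. (exp (-(complex_of_real (s+h) * c)) - exp (-(complex_of_real s * c))) / complex_of_real h)
          \<longlongrightarrow> exp (-(complex_of_real s * c)) * (-c)) (at_right 0)"
proof -
  have D: "((\<lambda>z. exp (-(z*c))) has_field_derivative (exp (-(complex_of_real s * c)) * (-c))) (at (complex_of_real s))"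
    by (auto intro!: derivative_eq_intros)
  then have L: "((\<lambda>k. (exp (-((complex_of_real s + k)*c)) - exp (-(complex_of_real s * c))) / k)
      \<longlongrightarrow> exp (-(complex_of_real s * c)) * (-c)) (at 0)"
    unfolding DERIV_def by simp
  have F: "filterlim complex_of_real (at 0) (at_right (0::real))"
  proof (rule filterlim_atI)
    show "(complex_of_real \<longlongrightarrow> 0) (at_right 0)"
    proof -
      have "((\<lambda>x. complex_of_real x) \<longlongrightarrow> complex_of_real 0) (at_right (0::real))"
        by (intro tendsto_of_real tendsto_ident_at)
      then show ?thesis by simp
    qed
    show "\<forall>\<^sub>F x in at_right 0. complex_of_real x \<noteq> 0"
      using eventually_at_right_less[of "0::real"] by eventually_elim simp
  qed
  have "((\<lambda>h. (exp (-((complex_of_real s + complex_of_real h)*c)) - exp (-(complex_of_real s * c))) / complex_of_real h)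
      \<longlongrightarrow> exp (-(complex_of_real s * c)) * (-c)) (at_right 0)"
    using filterlim_compose[OF L F] by simp
  then show ?thesis by simp
qed

theorem mainTheorem2:
  fixes M :: "(real \<Rightarrow> complex) \<Rightarrow> (real \<Rightarrow> complex)"
    and m :: "nat \<Rightarrow> complex"
    and T :: "real \<Rightarrow> (real \<Rightarrow> complex) \<Rightarrow> (real \<Rightarrow> complex)"
  assumes "is_multiplier M m"
    and "C0_semigroup T"
    and "generates M T"
  shows "\<forall>t\<ge>0. is_multiplier (T t) (\<lambda>n. exp (complex_of_real t * m n))"
proof (intro allI impI)
  fix t :: real assume t: "t \<ge> 0"
  have Mop: "AR_operator M" and Mmon: "\<And>n. M (\<lambda>x. (complex_of_real x) ^ n) = (\<lambda>x. m n * (complex_of_real x) ^ n)"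
    using assms(1) unfolding is_multiplier_def by auto
  have Top: "\<And>s. s \<ge> 0 \<Longrightarrow> AR_operator (T s)"
    and Tsg: "\<And>s r f. s \<ge> 0 \<Longrightarrow> r \<ge> 0 \<Longrightarrow> f \<in> AR \<Longrightarrow> T s (T r f) = T (s + r) f"
    and T0: "\<And>f. f \<in> AR \<Longrightarrow> T 0 f = f"
    and Tc: "\<And>f s. f \<in> AR \<Longrightarrow> s \<ge> 0 \<Longrightarrow> AR_tendsto (\<lambda>t. T t f) (T s f) (at s within {0..})"
    using assms(2) unfolding C0_semigroup_def by auto
  have gen: "\<And>f. f \<in> AR \<Longrightarrow> AR_tendsto (\<lambda>t. \<lambda>x. (T t f x - f x) / complex_of_real t) (M f) (at_right 0)"
    using assms(3) unfolding generates_def by auto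
  have opAR: "\<And>S f. AR_operator S \<Longrightarrow> f \<in> AR \<Longrightarrow> S f \<in> AR"
    unfolding AR_operator_def by auto
  have opsc: "\<And>S f c. AR_operator S \<Longrightarrow> f \<in> AR \<Longrightarrow> S (\<lambda>x. c * f x) = (\<lambda>x. c * S f x)"
    unfolding AR_operator_def by auto
  show "is_multiplier (T t) (\<lambda>n. exp (complex_of_real t * m n))"
    unfolding is_multiplier_def
  proof (intro conjI allI)
    show "AR_operator (T t)" using Top t .
    fix n
    define f where "f = (\<lambda>x. (complex_of_real x) ^ n)"
    define mn where "mn = m n"
    have fAR: "f \<in> AR" unfolding f_def by (rule AR_pow)
    have Mf: "M f = (\<lambda>x. mn * f x)" unfolding f_def mn_def by (rule Mmon)
    have MfAR: "M f \<in> AR" using opAR[OF Mop fAR] .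
    show "T t (\<lambda>x. complex_of_real x ^ n) = (\<lambda>x. exp (complex_of_real t * m n) * complex_of_real x ^ n)"
    proof
      fix x
      define u where "u s = T s f x" for s
      define E where "E r = exp (-(complex_of_real r * mn))" for r
      define v where "v r = E r * u r" for r
      have cont_u: "(u \<longlongrightarrow> u s) (at s within {0..})" if "s \<ge> 0" for s
        unfolding u_def using AR_tendsto_pointwise[OF Tc[OF fAR that]] .
      have der_u: "((\<lambda>h. (u (s+h) - u s) / complex_of_real h) \<longlongrightarrow> mn * u s) (at_right 0)"
        if s: "s \<ge> 0" for s
      proof -
        define D where "D h = (\<lambda>y. (T h f y - f y) / complex_of_real h)" for h
        have DAR: "D h \<in> AR" if "h > 0" for h
        proof -
          have "(\<lambda>y. T h f y - f y) \<in> AR" using AR_diff[OF opAR[OF Top fAR] fAR] that by simp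
          then have "(\<lambda>y. inverse (complex_of_real h) * (T h f y - f y)) \<in> AR" by (rule AR_scale)
          then show ?thesis unfolding D_def by (simp add: divide_inverse_commute)
        qed
        have evAR: "eventually (\<lambda>h. D h \<in> AR) (at_right 0)"
          using eventually_at_right_less[of "0::real"] by eventually_elim (rule DAR)
        have lim: "((\<lambda>h. T s (D h) x) \<longlongrightarrow> T s (M f) x) (at_right 0)"
          by (rule op_tendsto_pointwise[OF Top[OF s] _ evAR MfAR]) (use gen[OF fAR] in \<open>simp add: D_def\<close>)
        have TMf: "T s (M f) x = mn * u s"
          unfolding Mf u_def using opsc[OF Top[OF s] fAR] by simp
        have eq: "T s (D h) x = (u (s+h) - u s) / complex_of_real h" if h: "h > 0" for h
        proof -
          have hAR: "(\<lambda>y. T h f y - f y) \<in> AR" using AR_diff[OF opAR[OF Top fAR] fAR] h by simp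
          have "D h = (\<lambda>y. inverse (complex_of_real h) * (T h f y - f y))"
            unfolding D_def by (simp add: divide_inverse_commute)
          then have "T s (D h) = (\<lambda>y. inverse (complex_of_real h) * T s (\<lambda>y. T h f y - f y) y)"
            using opsc[OF Top[OF s] hAR] by simp
          also have "T s (\<lambda>y. T h f y - f y) = (\<lambda>y. T s (T h f) y - T s f y)"
            by (rule op_diff[OF Top[OF s] opAR[OF Top fAR] fAR]) (use h in simp)
          also have "T s (T h f) = T (s+h) f" using Tsg[OF s _ fAR] h by simp
          finally show ?thesis unfolding u_def by (simp add: divide_inverse_commute)
        qed
        have "eventually (\<lambda>h. T s (D h) x = (u (s+h) - u s) / complex_of_real h) (at_right 0)"
          using eventually_at_right_less[of "0::real"] by eventually_elim (rule eq)
        with lim show ?thesis unfolding TMf by (rule Lim_transform_eventually)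
      qed
      have cont_v: "(v \<longlongrightarrow> v s) (at s within {0..})" if "s \<ge> 0" for s
        unfolding v_def E_def
        by (intro tendsto_intros cont_u that)
      have der_v: "((\<lambda>h. (v (s+h) - v s) / complex_of_real h) \<longlongrightarrow> 0) (at_right 0)"
        if s: "s \<ge> 0" for s
      proof -
        have q: "(v (s+h) - v s) / complex_of_real h =
            E (s+h) * ((u (s+h) - u s) / complex_of_real h) + u s * ((E (s+h) - E s) / complex_of_real h)" for h
        proof -
          have "v (s+h) - v s = E (s+h) * (u (s+h) - u s) + u s * (E (s+h) - E s)"
            unfolding v_def by (simp add: algebra_simps)
          then show ?thesis by (simp only: add_divide_distrib times_divide_eq_right)
        qed
        have E1: "((\<lambda>h. E (s+h)) \<longlongrightarrow> E s) (at_right 0)"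
        proof -
          have "((\<lambda>h. E (s+h)) \<longlongrightarrow> E (s+0)) (at_right 0)"
            unfolding E_def by (intro tendsto_intros)
          then show ?thesis by simp
        qed
        have E2: "((\<lambda>h. (E (s+h) - E s) / complex_of_real h) \<longlongrightarrow> E s * (-mn)) (at_right 0)"
          unfolding E_def by (rule exp_quot)
        have "((\<lambda>h. E (s+h) * ((u (s+h) - u s) / complex_of_real h) + u s * ((E (s+h) - E s) / complex_of_real h))
            \<longlongrightarrow> E s * (mn * u s) + u s * (E s * (-mn))) (at_right 0)"
          by (intro tendsto_intros E1 E2 der_u s)
        then show ?thesis unfolding q by (simp add: algebra_simps)
      qed
      have "v t = v 0" by (rule right_deriv_zero_const[OF cont_v der_v t])
      then have "E t * u t = f x" unfolding v_def E_def u_def using T0[OF fAR] by simp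
      have "u t = (exp (complex_of_real t * mn) * E t) * u t"
        unfolding E_def by (simp only: exp_minus_inverse mult_1_left)
      also have "\<dots> = exp (complex_of_real t * mn) * (E t * u t)" by (simp only: mult.assoc)
      finally have "u t = exp (complex_of_real t * mn) * f x" using \<open>E t * u t = f x\<close> by simp
      then show "T t (\<lambda>x. complex_of_real x ^ n) x = exp (complex_of_real t * m n) * complex_of_real x ^ n"
        unfolding u_def f_def mn_def by simp
    qed
  qed
qed

end
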